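(* Let $m,\hat m\in\mathbb{N}$ and $\bar m=m+\hat m$. Then (i) $$\sum_{M}p^{|\bigcup_{\Gamma\in M}\Gamma|}\le c_m\frac{n^{m v_{G_0}}p^{m e_{G_0}}}{\Psi_{\min}^{m-1}},$$ where the sum runs over all sets of connected copies $M$ of size $m$; (ii) $$\sum_{M,\hat M}p^{|\bigcup_{\Gamma\in M\cup\hat M}\Gamma|}\le c_{\bar m}\frac{n^{\bar m v_{G_0}}p^{\bar m e_{G_0}}}{\Psi_{\min}^{\bar m-2}\min\{\Psi_{\min},1\}},$$ where the sum runs over all pairs of a set of connected copies $M$ of size $m$ and a set of connected copies $\hat M$ of size $\hat m$. Here $c_k:=(v_{G_0}!)^{k-1}\,2^{\frac12k(k-1)e_{G_0}}\,\operatorname{aut}(G_0)^{-k}$ for $k\in\mathbb{N}$.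
   Context: $G_0$ is a graph with at least one edge and no isolated vertices; $v_H,e_H,\operatorname{aut}(H)$ denote the numbers of vertices, edges and automorphisms of a graph $H$. $E$ is the set of edges of the complete graph $K_n$ and $p\in(0,1)$. $\mathcal{M}$ is the set of all $\Gamma\subset E$ such that the graph consisting of the edges $\Gamma$ and their endpoints is isomorphic to $G_0$ (copies of $G_0$). For $\Gamma\in\mathcal{M}$, the neighborhood $\mathcal{M}_\Gamma$ is the set of $\Gamma'\in\mathcal{M}$ with $\Gamma'\cap\Gamma\neq\emptyset$. A set of connected copies of size $m$ is a sequence $M=(\Gamma_1,\dots,\Gamma_m)$ with $\Gamma_1\in\mathcal{M}$ and $\Gamma_i\in\bigcup_{j<i}\mathcal{M}_{\Gamma_j}$ for $2\le i\le m$. $\Psi_{\min}=\min\{n^{v_H}p^{e_H}:H\subset G_0,\ e_H\ge1\}$. *)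

theory Defs
  imports Complex_Main
begin

text \<open>A graph without isolated vertices is represented by its edge set
  (a finite set of 2-element sets); its vertex set is the union of the edges.\<close>

definition verts :: "'a set set \<Rightarrow> 'a set" where
  "verts G = \<Union> G"

definition is_graph :: "'a set set \<Rightarrow> bool" where
  "is_graph G \<longleftrightarrow> finite G \<and> (\<forall>e\<in>G. card e = 2)"

definition Kn_edges :: "nat \<Rightarrow> nat set set" where
  "Kn_edges n = {{i, j} | i j. i < n \<and> j < n \<and> i \<noteq> j}"

definition graph_iso :: "'a set set \<Rightarrow> 'b set set \<Rightarrow> bool" where
  "graph_iso G H \<longleftrightarrow> (\<exists>f. bij_betw f (verts G) (verts H) \<and> (\<lambda>e. f ` e) ` G = H)"

definition copies :: "'a set set \<Rightarrow> nat \<Rightarrow> nat set set set" where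
  "copies G0 n = {\<Gamma>. \<Gamma> \<subseteq> Kn_edges n \<and> graph_iso G0 \<Gamma>}"

text \<open>Sets of connected copies of size m, as sequences (lists):
  each entry is a copy, and each entry after the first shares an edge with an earlier one.\<close>
definition connected_copies :: "'a set set \<Rightarrow> nat \<Rightarrow> nat \<Rightarrow> nat set set list set" where
  "connected_copies G0 n m =
     {xs. length xs = m \<and> (\<forall>i<m. xs ! i \<in> copies G0 n) \<and>
          (\<forall>i. 0 < i \<and> i < m \<longrightarrow> (\<exists>j<i. xs ! i \<inter> xs ! j \<noteq> {}))}"

definition aut :: "'a set set \<Rightarrow> nat" where
  "aut G = card {f. bij_betw f (verts G) (verts G) \<and> (\<lambda>e. f ` e) ` G = G
                    \<and> (\<forall>x. x \<notin> verts G \<longrightarrow> f x = x)}"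

definition Psi_min :: "'a set set \<Rightarrow> nat \<Rightarrow> real \<Rightarrow> real" where
  "Psi_min G0 n p = Min {real n ^ card W * p ^ card F | W F.
       F \<subseteq> G0 \<and> F \<noteq> {} \<and> \<Union> F \<subseteq> W \<and> W \<subseteq> verts G0}"

definition c_const :: "'a set set \<Rightarrow> nat \<Rightarrow> real" where
  "c_const G0 k = real (fact (card (verts G0))) ^ (k - 1)
      * 2 powr (real (k * (k - 1) * card G0) / 2) / real (aut G0) ^ k"

end

theory Submission imports Defs "HOL-Library.FuncSet" begin

lemma count_cover:
  fixes V :: "'a set" and W :: "nat set"
  assumes "finite V" "finite W"
  shows "card {f \<in> V \<rightarrow>\<^sub>E {..<n}. inj_on f V \<and> W \<subseteq> f ` V}
           \<le> fact (card V) * n ^ (card V - card W)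
       \<and> (card W > card V \<longrightarrow> {f \<in> V \<rightarrow>\<^sub>E {..<n}. inj_on f V \<and> W \<subseteq> f ` V} = {})"
  using assms
proof (induction V arbitrary: W rule: finite_induct)
  case empty
  have sub0: "{f \<in> {} \<rightarrow>\<^sub>E {..<n}. inj_on f {} \<and> W \<subseteq> f ` {}} \<subseteq> {\<lambda>_. undefined}" by (simp add: subset_iff)
  have "card {f \<in> {} \<rightarrow>\<^sub>E {..<n}. inj_on f {} \<and> W \<subseteq> f ` {}} \<le> 1"
    using card_mono[OF _ sub0] by simp
  then show ?case by auto
next
  case (insert x V)
  define S where "S = (\<lambda>(V::'a set) (W::nat set). {f \<in> V \<rightarrow>\<^sub>E {..<n}. inj_on f V \<and> W \<subseteq> f ` V})"
  have emp: "S V' W' = {}" if "card W' > card V'" "finite V'" for V' W'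
  proof (rule ccontr)
    assume "S V' W' \<noteq> {}"
    then obtain f where "W' \<subseteq> f ` V'" unfolding S_def by auto
    then have "card W' \<le> card (f ` V')" using that by (meson card_mono finite_imageI)
    also have "\<dots> \<le> card V'" by (rule card_image_le[OF that(2)])
    finally show False using that by simp
  qed
  let ?v = "card V" and ?w = "card W"
  have cv: "card (insert x V) = Suc ?v" using insert by simp
  have finS: "finite (S V' W')" if "finite V'" for V' W'
    unfolding S_def by (rule finite_subset[OF _ finite_PiE[OF that, of "\<lambda>_. {..<n}"]]) auto
  show ?case
  proof (cases "?w > Suc ?v")
    case True
    then have lt: "card (insert x V) < card W" using cv by simp
    have E: "S (insert x V) W = {}" using emp[OF lt] insert(1) by simp
    show ?thesis unfolding S_def using E[unfolded S_def] lt by (simp only: card.empty) simp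
  next
    case False
    define T where "T = (SIGMA y:W. S V (W - {y})) \<union> ({..<n} \<times> S V W)"
    have sub: "S (insert x V) W \<subseteq> (\<lambda>(y, g). g(x := y)) ` T"
    proof
      fix f assume f: "f \<in> S (insert x V) W"
      define g where "g = f(x := undefined)"
      have fg: "f = g(x := f x)" unfolding g_def by simp
      have gP: "g \<in> V \<rightarrow>\<^sub>E {..<n}" using f insert(2) unfolding S_def g_def by (auto simp: PiE_def Pi_def extensional_def)
      have gi: "inj_on g V" using f insert(2) unfolding S_def g_def
        by (auto simp: inj_on_def)
      have gim: "g ` V = f ` V" using insert(2) unfolding g_def by auto
      have fx: "f x < n" using f unfolding S_def by auto
      have Wsub: "W \<subseteq> insert (f x) (g ` V)" using f gim unfolding S_def by auto
      have "(f x, g) \<in> T"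
      proof (cases "f x \<in> W")
        case True
        then show ?thesis unfolding T_def S_def using gP gi Wsub by auto
      next
        case False
        then show ?thesis unfolding T_def S_def using gP gi Wsub fx by auto
      qed
      then show "f \<in> (\<lambda>(y, g). g(x := y)) ` T" using fg by force
    qed
    have finT: "finite T" unfolding T_def using finS insert(1) insert.prems by auto
    have "card (S (insert x V) W) \<le> card T"
      by (rule order_trans[OF card_mono[OF finite_imageI[OF finT] sub] card_image_le[OF finT]])
    also have "\<dots> \<le> card (SIGMA y:W. S V (W - {y})) + card ({..<n} \<times> S V W)"
      unfolding T_def by (rule card_Un_le)
    also have "card (SIGMA y:W. S V (W - {y})) = (\<Sum>y\<in>W. card (S V (W - {y})))"
      using insert.prems finS insert(1) by (simp add: card_SigmaI)
    also have "\<dots> \<le> (\<Sum>y\<in>W. fact ?v * n ^ (?v - (?w - 1)))"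
    proof (rule sum_mono)
      fix y assume "y \<in> W"
      then have "card (W - {y}) = ?w - 1" using insert.prems by simp
      then show "card (S V (W - {y})) \<le> fact ?v * n ^ (?v - (?w - 1))"
        using insert.IH[of "W - {y}"] insert.prems unfolding S_def by simp
    qed
    also have "card ({..<n} \<times> S V W) = n * card (S V W)" by (simp add: card_cartesian_product)
    finally have bound: "card (S (insert x V) W) \<le> ?w * (fact ?v * n ^ (?v - (?w - 1))) + n * card (S V W)"
      by simp
    have main: "card (S (insert x V) W) \<le> fact (Suc ?v) * n ^ (Suc ?v - ?w)"
    proof (cases "?w \<le> ?v")
      case True
      have c2: "n * card (S V W) \<le> fact ?v * n ^ (Suc ?v - ?w)"
      proof -
        have "n * card (S V W) \<le> n * (fact ?v * n ^ (?v - ?w))"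
          using insert.IH[of W] insert.prems unfolding S_def by simp
        also have "\<dots> = fact ?v * n ^ (Suc ?v - ?w)" using True
          by (simp add: Suc_diff_le)
        finally show ?thesis .
      qed
      show ?thesis
      proof (cases "?w = 0")
        case True
        then have "card (S (insert x V) W) \<le> n * card (S V W)" using bound by simp
        then have "card (S (insert x V) W) \<le> fact ?v * n ^ (Suc ?v - ?w)" using c2 by (rule order_trans)
        also have "\<dots> \<le> fact (Suc ?v) * n ^ (Suc ?v - ?w)"
          by (intro mult_right_mono fact_mono) auto
        finally show ?thesis .
      next
        case False
        have e: "?v - (?w - 1) = Suc ?v - ?w" using False True by simp
        have "card (S (insert x V) W) \<le> (?w + 1) * (fact ?v * n ^ (Suc ?v - ?w))"
          using bound c2 e by (simp add: algebra_simps)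
        also have "\<dots> \<le> (Suc ?v) * (fact ?v * n ^ (Suc ?v - ?w))"
          using True by (intro mult_right_mono) auto
        also have "\<dots> = fact (Suc ?v) * n ^ (Suc ?v - ?w)" by (simp add: algebra_simps)
        finally show ?thesis .
      qed
    next
      case notle: False
      then have w: "?w = Suc ?v" using False by simp
      have "S V W = {}" using emp[of V W] notle insert(1) by simp
      then have "card (S (insert x V) W) \<le> Suc ?v * fact ?v" using bound w by simp
      then show ?thesis using w by (simp add: fact_Suc)
    qed
    show ?thesis using main emp[of "insert x V" W] cv insert(1) unfolding S_def by simp
  qed
qed


lemma alg:
  fixes f c X P \<mu> :: real and a b ta tb e :: nat
  assumes "c \<noteq> 0" "P \<noteq> 0" "\<mu> \<noteq> 0"
  shows "X ^ Suc a * f ^ a * 2 ^ (ta * e) / (c ^ Suc a * P ^ a) *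
         (2 ^ ((Suc b * Suc a + tb) * e) * (f / c * X) ^ Suc b / (\<mu> * P ^ b))
       = f ^ Suc (a + b) * 2 ^ ((ta + Suc a * Suc b + tb) * e) / c ^ (Suc a + Suc b) * X ^ (Suc a + Suc b)
         / (P ^ (a + b) * \<mu>)"
proof -
  have p2: "(2::real) ^ ((ta + Suc a * Suc b + tb) * e) = 2 ^ (ta * e) * 2 ^ ((Suc b * Suc a + tb) * e)"
    by (simp add: power_add[symmetric] algebra_simps)
  show ?thesis unfolding p2 using assms
    by (simp add: power_add power_mult_distrib power_divide field_simps)
qed

definition tri :: "nat \<Rightarrow> nat" where "tri j = (\<Sum>i<j. i)"
lemma tri_Suc: "tri (Suc j) = tri j + j" unfolding tri_def by simp
lemma tri_1: "tri 1 = 0" unfolding tri_def by simp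

lemma tri2: "2 * tri k = k * (k - 1)"
proof (induction k)
  case 0 show ?case by (simp add: tri_def)
next
  case (Suc k)
  have "2 * tri (Suc k) = k * (k - 1) + 2 * k" using Suc by (simp add: tri_Suc)
  also have "\<dots> = Suc k * k" by (cases k) (simp_all add: algebra_simps)
  finally show ?case by simp
qed

lemma tri_add: "tri (a + b) = tri a + a * b + tri b"
proof (induction b)
  case 0 show ?case by (simp add: tri_def)
next
  case (Suc b)
  have "tri (a + Suc b) = tri (a + b) + (a + b)" by (simp add: tri_Suc)
  then show ?case using Suc by (simp add: tri_Suc)
qed

locale setting =
  fixes G0 :: "'a set set" and n :: nat and p :: real
  assumes graph: "is_graph G0" and ne: "G0 \<noteq> {}" and p0: "0 < p" and p1: "p < 1" and n0: "0 < n"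
begin

abbreviation "V \<equiv> verts G0"
definition emb :: "('a \<Rightarrow> nat) set" where "emb = {f \<in> V \<rightarrow>\<^sub>E {..<n}. inj_on f V}"
definition img :: "('a \<Rightarrow> nat) \<Rightarrow> nat set set" where "img f = (\<lambda>e. f ` e) ` G0"

lemma finG: "finite G0" using graph unfolding is_graph_def by simp
lemma edge_fin: "e \<in> G0 \<Longrightarrow> finite e"
  using graph unfolding is_graph_def by (metis card.infinite zero_neq_numeral)
lemma finV: "finite V" unfolding verts_def using finG edge_fin by blast
lemma edge_sub: "e \<in> G0 \<Longrightarrow> e \<subseteq> V" unfolding verts_def by blast
lemma fin_emb: "finite emb"
  unfolding emb_def by (rule finite_subset[OF _ finite_PiE[OF finV, of "\<lambda>_. {..<n}"]]) auto
lemma card_emb: "card emb \<le> n ^ card V"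
proof -
  have "card emb \<le> card (V \<rightarrow>\<^sub>E {..<n})"
    unfolding emb_def by (rule card_mono[OF finite_PiE[OF finV]]) auto
  also have "\<dots> = n ^ card V" using finV by (simp add: card_PiE)
  finally show ?thesis .
qed
lemma finKn: "finite (Kn_edges n)"
  unfolding Kn_edges_def by (rule finite_subset[of _ "Pow {..<n}"]) auto
lemma fin_copies: "finite (copies G0 n)"
  unfolding copies_def by (rule finite_subset[of _ "Pow (Kn_edges n)"]) (auto simp: finKn)

lemma Union_img: "\<Union>(img f) = f ` V" unfolding img_def verts_def by auto

lemma card_img: assumes "inj_on f V" shows "card (img f) = card G0"
proof -
  have "inj_on (image f) (Pow V)" by (rule inj_on_image_Pow[OF assms])
  then have "inj_on (image f) G0" by (rule inj_on_subset) (auto dest: edge_sub)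
  then show ?thesis unfolding img_def by (rule card_image)
qed

definition Aut where "Aut = {f. bij_betw f V V \<and> (\<lambda>e. f ` e) ` G0 = G0 \<and> (\<forall>x. x \<notin> V \<longrightarrow> f x = x)}"

lemma aut_eq: "aut G0 = card Aut" unfolding aut_def Aut_def by simp

lemma fin_Aut: "finite Aut"
proof -
  have inj: "inj_on (\<lambda>f. restrict f V) Aut"
  proof (rule inj_onI)
    fix f g assume fg: "f \<in> Aut" "g \<in> Aut" "restrict f V = restrict g V"
    show "f = g"
    proof
      fix x show "f x = g x"
      proof (cases "x \<in> V")
        case True
        have "restrict f V x = restrict g V x" using fg(3) by simp
        then show ?thesis using True by simp
      next
        case False then show ?thesis using fg(1,2) unfolding Aut_def by simp
      qed
    qed
  qed
  have "(\<lambda>f. restrict f V) ` Aut \<subseteq> V \<rightarrow>\<^sub>E V"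
  proof
    fix g assume "g \<in> (\<lambda>f. restrict f V) ` Aut"
    then obtain f where f: "f \<in> Aut" "g = restrict f V" by blast
    have "bij_betw f V V" using f(1) unfolding Aut_def by simp
    then have "f ` V = V" by (simp add: bij_betw_def)
    then have "\<forall>x\<in>V. f x \<in> V" by blast
    then show "g \<in> V \<rightarrow>\<^sub>E V" using f(2) by auto
  qed
  then have "finite ((\<lambda>f. restrict f V) ` Aut)"
    by (rule finite_subset) (rule finite_PiE[OF finV finV])
  then show ?thesis using inj finite_imageD by auto
qed

lemma aut_pos: "aut G0 > 0"
proof -
  have "id \<in> Aut" unfolding Aut_def by simp
  then have "Aut \<noteq> {}" by blast
  then show ?thesis unfolding aut_eq using fin_Aut by (simp add: card_gt_0_iff)
qed

lemma copy_emb: assumes "\<Gamma> \<in> copies G0 n"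
  obtains h where "h \<in> emb" "img h = \<Gamma>"
proof -
  obtain h where h: "bij_betw h V (verts \<Gamma>)" "(\<lambda>e. h ` e) ` G0 = \<Gamma>"
    using assms unfolding copies_def graph_iso_def by auto
  have vG: "verts \<Gamma> \<subseteq> {..<n}"
  proof
    fix y assume "y \<in> verts \<Gamma>"
    then obtain e where e: "e \<in> \<Gamma>" "y \<in> e" unfolding verts_def by blast
    then have "e \<in> Kn_edges n" using assms unfolding copies_def by blast
    then show "y \<in> {..<n}" using e(2) unfolding Kn_edges_def by blast
  qed
  have hx: "\<forall>x\<in>V. h x < n" using h(1) vG unfolding bij_betw_def by blast
  have "inj_on (restrict h V) V" using h(1) unfolding bij_betw_def inj_on_def by simp
  then have "restrict h V \<in> emb" using hx unfolding emb_def by simp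
  moreover have "img (restrict h V) = \<Gamma>"
  proof -
    have "(\<lambda>e. restrict h V ` e) ` G0 = (\<lambda>e. h ` e) ` G0"
    proof (rule image_cong[OF refl])
      fix e assume "e \<in> G0"
      then have eV: "e \<subseteq> V" by (rule edge_sub)
      show "restrict h V ` e = h ` e"
        by (rule image_cong[OF refl]) (use eV in \<open>simp add: subset_iff\<close>)
    qed
    then show ?thesis using h(2) unfolding img_def by simp
  qed
  ultimately show ?thesis using that by blast
qed

lemma aut_le: assumes "\<Gamma> \<in> copies G0 n"
  shows "aut G0 \<le> card {f \<in> emb. img f = \<Gamma>}"
proof -
  obtain h where h: "h \<in> emb" "img h = \<Gamma>" using copy_emb[OF assms] by blast
  have hV: "h ` V \<subseteq> {..<n}" "inj_on h V" using h(1) unfolding emb_def by auto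
  define \<Phi> where "\<Phi> = (\<lambda>\<sigma>. restrict (h \<circ> \<sigma>) V)"
  have sub: "\<Phi> ` Aut \<subseteq> {f \<in> emb. img f = \<Gamma>}"
  proof
    fix f assume "f \<in> \<Phi> ` Aut"
    then obtain \<sigma> where s: "\<sigma> \<in> Aut" "f = \<Phi> \<sigma>" by blast
    have sb: "bij_betw \<sigma> V V" "(\<lambda>e. \<sigma> ` e) ` G0 = G0" using s(1) unfolding Aut_def by auto
    have sx: "\<forall>x\<in>V. \<sigma> x \<in> V" using sb(1) by (auto simp: bij_betw_def)
    have hx: "\<forall>y\<in>V. h y < n" using hV(1) by auto
    have "f \<in> V \<rightarrow>\<^sub>E {..<n}" using s(2) hx sx unfolding \<Phi>_def by auto
    moreover have "inj_on f V"
    proof -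
      have "inj_on (h \<circ> \<sigma>) V" using sb(1) hV(2) by (simp add: bij_betw_def comp_inj_on)
      then show ?thesis using s(2) unfolding \<Phi>_def by (simp add: inj_on_def)
    qed
    moreover have "img f = \<Gamma>"
    proof -
      have "img f = (\<lambda>e. h ` e) ` ((\<lambda>e. \<sigma> ` e) ` G0)"
        unfolding img_def image_image s(2) \<Phi>_def
      proof (rule image_cong[OF refl])
        fix e assume "e \<in> G0"
        then have eV: "e \<subseteq> V" by (rule edge_sub)
        show "restrict (h \<circ> \<sigma>) V ` e = (\<lambda>x. h (\<sigma> x)) ` e"
          by (rule image_cong[OF refl]) (use eV in \<open>simp add: subset_iff\<close>)
      qed
      then show ?thesis using sb(2) h(2) unfolding img_def by simp
    qed
    ultimately show "f \<in> {f \<in> emb. img f = \<Gamma>}" unfolding emb_def by blast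
  qed
  have inj: "inj_on \<Phi> Aut"
  proof (rule inj_onI)
    fix \<sigma> \<tau> assume st: "\<sigma> \<in> Aut" "\<tau> \<in> Aut" "\<Phi> \<sigma> = \<Phi> \<tau>"
    show "\<sigma> = \<tau>"
    proof
      fix x show "\<sigma> x = \<tau> x"
      proof (cases "x \<in> V")
        case True
        have "\<Phi> \<sigma> x = \<Phi> \<tau> x" using st(3) by simp
        then have "h (\<sigma> x) = h (\<tau> x)" using True unfolding \<Phi>_def by simp
        moreover have "\<sigma> x \<in> V" "\<tau> x \<in> V" using st True unfolding Aut_def bij_betw_def by auto
        ultimately show ?thesis using hV(2) by (meson inj_onD)
      next
        case False then show ?thesis using st unfolding Aut_def by auto
      qed
    qed
  qed
  have "card Aut \<le> card {f \<in> emb. img f = \<Gamma>}"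
    by (rule card_inj_on_le[OF inj sub]) (rule finite_subset[OF _ fin_emb], blast)
  then show ?thesis unfolding aut_eq .
qed


abbreviation "Psi \<equiv> Psi_min G0 n p"
definition "PsiSet = {real n ^ card W * p ^ card F | W F.
       F \<subseteq> G0 \<and> F \<noteq> {} \<and> \<Union> F \<subseteq> W \<and> W \<subseteq> V}"

lemma Psi_def': "Psi = Min PsiSet" unfolding Psi_min_def PsiSet_def by simp

lemma finPsiSet: "finite PsiSet"
proof -
  have "PsiSet \<subseteq> (\<lambda>(W, F). real n ^ card W * p ^ card F) ` (Pow V \<times> Pow G0)"
    unfolding PsiSet_def by auto
  moreover have "finite (Pow V \<times> Pow G0)" using finV finG by simp
  ultimately show ?thesis by (meson finite_imageI finite_subset)
qed

lemma Psi_le: assumes "F \<subseteq> G0" "F \<noteq> {}" shows "Psi \<le> real n ^ card (\<Union>F) * p ^ card F"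
proof -
  have "\<Union>F \<subseteq> V" using assms(1) unfolding verts_def by blast
  then have "real n ^ card (\<Union>F) * p ^ card F \<in> PsiSet" unfolding PsiSet_def using assms by blast
  then show ?thesis unfolding Psi_def' using finPsiSet by simp
qed

lemma Psi_pos: "0 < Psi"
proof -
  have "real n ^ card V * p ^ card G0 \<in> PsiSet" unfolding PsiSet_def verts_def using ne by blast
  then have ne': "PsiSet \<noteq> {}" by blast
  have "Psi \<in> PsiSet" unfolding Psi_def' by (rule Min_in[OF finPsiSet ne'])
  then show ?thesis unfolding PsiSet_def using n0 p0 by auto
qed

definition K :: real where "K = fact (card V) / real (aut G0) * (real n ^ card V * p ^ card G0)"

lemma K_nonneg: "0 \<le> K" unfolding K_def using p0 by simp

lemma inj_img_edges: assumes "inj_on f V" shows "inj_on (image f) G0"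
proof -
  have "inj_on (image f) (Pow V)" by (rule inj_on_image_Pow[OF assms])
  then show "inj_on (image f) G0" by (rule inj_on_subset) (auto dest: edge_sub)
qed

lemma copy_card: assumes "\<Gamma> \<in> copies G0 n" shows "card \<Gamma> = card G0"
proof -
  obtain h where h: "h \<in> emb" "img h = \<Gamma>" using copy_emb[OF assms] by blast
  then show ?thesis using card_img[of h] unfolding emb_def by auto
qed

lemma copy_fin: assumes "\<Gamma> \<in> copies G0 n" shows "finite \<Gamma>"
  using copy_card[OF assms] finG ne card_0_eq by fastforce

lemma CF_card:
  assumes "F \<subseteq> U"
  shows "card {\<Gamma> \<in> copies G0 n. \<Gamma> \<inter> U = F} * aut G0 \<le> fact (card V) * n ^ (card V - card (\<Union>F))"
proof (cases "{\<Gamma> \<in> copies G0 n. \<Gamma> \<inter> U = F} = {}")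
  case True then show ?thesis by (simp only: True card.empty)
next
  case False
  define C where "C = {\<Gamma> \<in> copies G0 n. \<Gamma> \<inter> U = F}"
  define A where "A = (\<lambda>\<Gamma>. {f \<in> emb. img f = \<Gamma>})"
  obtain \<Gamma>0 where g0: "\<Gamma>0 \<in> C" using False unfolding C_def by blast
  obtain h where h: "h \<in> emb" "img h = \<Gamma>0" using copy_emb[of \<Gamma>0] g0 unfolding C_def by blast
  have "\<Union>F \<subseteq> \<Union>\<Gamma>0" using g0 unfolding C_def by blast
  also have "\<dots> = h ` V" using Union_img[of h] unfolding h(2) .
  finally have finF: "finite (\<Union>F)" using finV finite_subset by blast
  have finC: "finite C" unfolding C_def using fin_copies by simp
  have "card C * aut G0 = (\<Sum>\<Gamma>\<in>C. aut G0)" by simp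
  also have "\<dots> \<le> (\<Sum>\<Gamma>\<in>C. card (A \<Gamma>))"
    by (rule sum_mono) (use aut_le in \<open>auto simp: C_def A_def\<close>)
  also have "\<dots> = card (\<Union>(A ` C))"
    by (rule card_UN_disjoint[symmetric]) (use finC fin_emb in \<open>auto simp: A_def\<close>)
  also have "\<dots> \<le> card {f \<in> V \<rightarrow>\<^sub>E {..<n}. inj_on f V \<and> \<Union>F \<subseteq> f ` V}"
  proof (rule card_mono)
    show "finite {f \<in> V \<rightarrow>\<^sub>E {..<n}. inj_on f V \<and> \<Union>F \<subseteq> f ` V}"
      by (rule finite_subset[OF _ finite_PiE[OF finV, of "\<lambda>_. {..<n}"]]) auto
    show "\<Union>(A ` C) \<subseteq> {f \<in> V \<rightarrow>\<^sub>E {..<n}. inj_on f V \<and> \<Union>F \<subseteq> f ` V}"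
    proof
      fix f assume "f \<in> \<Union>(A ` C)"
      then obtain \<Gamma> where g: "\<Gamma> \<in> C" "f \<in> emb" "img f = \<Gamma>" unfolding A_def by blast
      have "\<Union>F \<subseteq> \<Union>\<Gamma>" using g(1) unfolding C_def by blast
      also have "\<dots> = f ` V" using Union_img[of f] unfolding g(3) .
      finally show "f \<in> {f \<in> V \<rightarrow>\<^sub>E {..<n}. inj_on f V \<and> \<Union>F \<subseteq> f ` V}"
        using g(2) unfolding emb_def by blast
    qed
  qed
  also have "\<dots> \<le> fact (card V) * n ^ (card V - card (\<Union>F))"
    using count_cover[OF finV finF, of n] by blast
  finally show ?thesis unfolding C_def .
qed

lemma CF_Psi:
  assumes "\<Gamma>0 \<in> copies G0 n" "F \<subseteq> \<Gamma>0"
  shows "card (\<Union>F) \<le> card V \<and> card F \<le> card G0 \<and> (F \<noteq> {} \<longrightarrow> Psi \<le> real n ^ card (\<Union>F) * p ^ card F)"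
proof -
  obtain h where h: "h \<in> emb" "img h = \<Gamma>0" using copy_emb[OF assms(1)] by blast
  have hi: "inj_on h V" using h(1) unfolding emb_def by simp
  define H where "H = {e \<in> G0. h ` e \<in> F}"
  have HF: "image h ` H = F"
  proof
    show "image h ` H \<subseteq> F" unfolding H_def by blast
    show "F \<subseteq> image h ` H"
    proof
      fix x assume xF: "x \<in> F"
      then have "x \<in> image h ` G0" using assms(2) h(2) unfolding img_def by blast
      then obtain e where "e \<in> G0" "x = h ` e" by blast
      then show "x \<in> image h ` H" using xF unfolding H_def by blast
    qed
  qed
  have HG: "H \<subseteq> G0" unfolding H_def by blast
  have inH: "inj_on (image h) H" by (rule inj_on_subset[OF inj_img_edges[OF hi] HG])
  have cH: "card H = card F" using card_image[OF inH] unfolding HF by simp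
  have HV: "\<Union>H \<subseteq> V" unfolding H_def verts_def by blast
  have UF: "\<Union>F = h ` \<Union>H" unfolding HF[symmetric] by (rule image_Union[symmetric])
  have cU: "card (\<Union>F) = card (\<Union>H)" unfolding UF
    by (rule card_image) (rule inj_on_subset[OF hi HV])
  have c1: "card (\<Union>F) \<le> card V" unfolding cU by (rule card_mono[OF finV HV])
  have c2: "card F \<le> card G0" unfolding cH[symmetric] H_def by (rule card_mono[OF finG]) auto
  have "F \<noteq> {} \<longrightarrow> Psi \<le> real n ^ card (\<Union>F) * p ^ card F"
  proof
    assume "F \<noteq> {}"
    then have "H \<noteq> {}" using HF by blast
    moreover have "H \<subseteq> G0" unfolding H_def by blast
    ultimately show "Psi \<le> real n ^ card (\<Union>F) * p ^ card F"
      using Psi_le[of H] cU cH by simp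
  qed
  then show ?thesis using c1 c2 by blast
qed


lemma inner_gen:
  assumes "F \<subseteq> U" "\<Gamma>0 \<in> copies G0 n" "\<Gamma>0 \<inter> U = F"
  shows "(\<Sum>\<Gamma>\<in>{\<Gamma> \<in> copies G0 n. \<Gamma> \<inter> U = F}. p ^ card (\<Gamma> - U))
           \<le> K / (real n ^ card (\<Union>F) * p ^ card F)"
proof -
  define C where "C = {\<Gamma> \<in> copies G0 n. \<Gamma> \<inter> U = F}"
  have FG: "F \<subseteq> \<Gamma>0" using assms(3) by blast
  have ps: "card (\<Union>F) \<le> card V" "card F \<le> card G0" using CF_Psi[OF assms(2) FG] by auto
  have ca: "real (card C) * real (aut G0) \<le> fact (card V) * real n ^ (card V - card (\<Union>F))"
  proof -
    have "card C * aut G0 \<le> fact (card V) * n ^ (card V - card (\<Union>F))"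
      unfolding C_def by (rule CF_card[OF assms(1)])
    then have "real (card C * aut G0) \<le> real (fact (card V) * n ^ (card V - card (\<Union>F)))"
      by (rule of_nat_mono)
    then show ?thesis by simp
  qed
  have ap: "0 < real (aut G0)" using aut_pos by simp
  have cC: "real (card C) \<le> fact (card V) * real n ^ (card V - card (\<Union>F)) / real (aut G0)"
    using ca ap by (simp add: field_simps)
  have eq: "p ^ card (\<Gamma> - U) = p ^ (card G0 - card F)" if "\<Gamma> \<in> C" for \<Gamma>
  proof -
    have g: "\<Gamma> \<in> copies G0 n" "\<Gamma> \<inter> U = F" using that unfolding C_def by auto
    have "finite (\<Gamma> \<inter> U)" using copy_fin[OF g(1)] by simp
    then have "card (\<Gamma> - U) = card \<Gamma> - card (\<Gamma> \<inter> U)" by (rule card_Diff_subset_Int)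
    then show ?thesis using copy_card[OF g(1)] g(2) by simp
  qed
  have "(\<Sum>\<Gamma>\<in>C. p ^ card (\<Gamma> - U)) = (\<Sum>\<Gamma>\<in>C. p ^ (card G0 - card F))"
    by (rule sum.cong[OF refl eq])
  also have "\<dots> = real (card C) * p ^ (card G0 - card F)" by simp
  also have "\<dots> \<le> fact (card V) * real n ^ (card V - card (\<Union>F)) / real (aut G0) * p ^ (card G0 - card F)"
    by (rule mult_right_mono[OF cC]) (use p0 in simp)
  also have "\<dots> = K / (real n ^ card (\<Union>F) * p ^ card F)"
  proof -
    have "real n ^ (card V - card (\<Union>F)) = real n ^ card V / real n ^ card (\<Union>F)"
      using n0 ps(1) by (simp add: power_diff)
    moreover have "p ^ (card G0 - card F) = p ^ card G0 / p ^ card F"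
      using p0 ps(2) by (simp add: power_diff)
    ultimately show ?thesis unfolding K_def by (simp add: ac_simps)
  qed
  finally show ?thesis unfolding C_def .
qed

lemma inner_min:
  assumes "F \<subseteq> U"
  shows "(\<Sum>\<Gamma>\<in>{\<Gamma> \<in> copies G0 n. \<Gamma> \<inter> U = F}. p ^ card (\<Gamma> - U)) \<le> K / min Psi 1"
proof (cases "{\<Gamma> \<in> copies G0 n. \<Gamma> \<inter> U = F} = {}")
  case True
  have "0 \<le> K / min Psi 1" using K_nonneg Psi_pos by simp
  then show ?thesis by (simp only: True sum.empty)
next
  case False
  then obtain \<Gamma>0 where g: "\<Gamma>0 \<in> copies G0 n" "\<Gamma>0 \<inter> U = F" by blast
  have FG: "F \<subseteq> \<Gamma>0" using g(2) by blast
  have D: "min Psi 1 \<le> real n ^ card (\<Union>F) * p ^ card F"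
  proof (cases "F = {}")
    case True then show ?thesis by simp
  next
    case False
    then have "Psi \<le> real n ^ card (\<Union>F) * p ^ card F" using CF_Psi[OF g(1) FG] by blast
    then show ?thesis by linarith
  qed
  have mp: "0 < min Psi 1" using Psi_pos by simp
  have "K / (real n ^ card (\<Union>F) * p ^ card F) \<le> K / min Psi 1"
    by (rule divide_left_mono[OF D K_nonneg]) (use mp D n0 p0 in \<open>simp add: zero_less_mult_iff\<close>)
  with inner_gen[OF assms g] show ?thesis by linarith
qed

lemma inner_Psi:
  assumes "F \<subseteq> U" "F \<noteq> {}"
  shows "(\<Sum>\<Gamma>\<in>{\<Gamma> \<in> copies G0 n. \<Gamma> \<inter> U = F}. p ^ card (\<Gamma> - U)) \<le> K / Psi"
proof (cases "{\<Gamma> \<in> copies G0 n. \<Gamma> \<inter> U = F} = {}")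
  case True
  have "0 \<le> K / Psi" using K_nonneg Psi_pos by simp
  then show ?thesis by (simp only: True sum.empty)
next
  case False
  then obtain \<Gamma>0 where g: "\<Gamma>0 \<in> copies G0 n" "\<Gamma>0 \<inter> U = F" by blast
  have FG: "F \<subseteq> \<Gamma>0" using g(2) by blast
  have D: "Psi \<le> real n ^ card (\<Union>F) * p ^ card F" using CF_Psi[OF g(1) FG] assms(2) by blast
  have "K / (real n ^ card (\<Union>F) * p ^ card F) \<le> K / Psi"
    by (rule divide_left_mono[OF D K_nonneg]) (use Psi_pos D n0 p0 in \<open>simp add: zero_less_mult_iff\<close>)
  with inner_gen[OF assms(1) g] show ?thesis by linarith
qed

lemma sum_all:
  assumes "finite U"
  shows "(\<Sum>\<Gamma>\<in>copies G0 n. p ^ card (\<Gamma> - U)) \<le> 2 ^ card U * (K / min Psi 1)"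
proof -
  have "(\<Sum>\<Gamma>\<in>copies G0 n. p ^ card (\<Gamma> - U))
      = (\<Sum>F\<in>Pow U. \<Sum>\<Gamma>\<in>{\<Gamma> \<in> copies G0 n. \<Gamma> \<inter> U = F}. p ^ card (\<Gamma> - U))"
    by (rule sum.group[symmetric]) (use fin_copies assms in auto)
  also have "\<dots> \<le> real (card (Pow U)) * (K / min Psi 1)"
    by (rule sum_bounded_above) (rule inner_min, blast)
  also have "\<dots> = 2 ^ card U * (K / min Psi 1)" using assms by (simp add: card_Pow)
  finally show ?thesis .
qed

lemma sum_meet:
  assumes "finite U"
  shows "(\<Sum>\<Gamma>\<in>{\<Gamma> \<in> copies G0 n. \<Gamma> \<inter> U \<noteq> {}}. p ^ card (\<Gamma> - U)) \<le> 2 ^ card U * (K / Psi)"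
proof -
  have "(\<Sum>\<Gamma>\<in>{\<Gamma> \<in> copies G0 n. \<Gamma> \<inter> U \<noteq> {}}. p ^ card (\<Gamma> - U))
      = (\<Sum>F\<in>Pow U - {{}}. \<Sum>\<Gamma>\<in>{\<Gamma> \<in> {\<Gamma> \<in> copies G0 n. \<Gamma> \<inter> U \<noteq> {}}. \<Gamma> \<inter> U = F}. p ^ card (\<Gamma> - U))"
    by (rule sum.group[symmetric]) (use fin_copies assms in auto)
  also have "\<dots> = (\<Sum>F\<in>Pow U - {{}}. \<Sum>\<Gamma>\<in>{\<Gamma> \<in> copies G0 n. \<Gamma> \<inter> U = F}. p ^ card (\<Gamma> - U))"
  proof (rule sum.cong[OF refl])
    fix F assume "F \<in> Pow U - {{}}"
    then have "{\<Gamma> \<in> {\<Gamma> \<in> copies G0 n. \<Gamma> \<inter> U \<noteq> {}}. \<Gamma> \<inter> U = F} = {\<Gamma> \<in> copies G0 n. \<Gamma> \<inter> U = F}"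
      by auto
    then show "(\<Sum>\<Gamma>\<in>{\<Gamma> \<in> {\<Gamma> \<in> copies G0 n. \<Gamma> \<inter> U \<noteq> {}}. \<Gamma> \<inter> U = F}. p ^ card (\<Gamma> - U))
        = (\<Sum>\<Gamma>\<in>{\<Gamma> \<in> copies G0 n. \<Gamma> \<inter> U = F}. p ^ card (\<Gamma> - U))" by simp
  qed
  also have "\<dots> \<le> real (card (Pow U - {{}})) * (K / Psi)"
    by (rule sum_bounded_above) (rule inner_Psi, auto)
  also have "\<dots> \<le> real (card (Pow U)) * (K / Psi)"
  proof (rule mult_right_mono)
    show "real (card (Pow U - {{}})) \<le> real (card (Pow U))"
      using assms by (simp add: card_mono)
    show "0 \<le> K / Psi" using K_nonneg Psi_pos by simp
  qed
  also have "\<dots> = 2 ^ card U * (K / Psi)" using assms by (simp add: card_Pow)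
  finally show ?thesis .
qed

abbreviation "CC j \<equiv> connected_copies G0 n j"

lemma CC_set: "xs \<in> CC j \<Longrightarrow> set xs \<subseteq> copies G0 n \<and> length xs = j"
  unfolding connected_copies_def by (auto simp: in_set_conv_nth)

lemma finCC: "finite (CC j)"
proof (rule finite_subset[OF _ finite_lists_length_eq[OF fin_copies, of j]])
  show "CC j \<subseteq> {xs. set xs \<subseteq> copies G0 n \<and> length xs = j}" using CC_set by blast
qed

lemma card_Union_list: "set xs \<subseteq> copies G0 n \<Longrightarrow> finite (\<Union>(set xs)) \<and> card (\<Union>(set xs)) \<le> length xs * card G0"
proof (induction xs)
  case Nil then show ?case by simp
next
  case (Cons x xs)
  have x: "x \<in> copies G0 n" using Cons.prems by simp
  have ih: "finite (\<Union>(set xs)) \<and> card (\<Union>(set xs)) \<le> length xs * card G0" using Cons by simp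
  have "card (\<Union>(set (x # xs))) = card (x \<union> \<Union>(set xs))" by simp
  also have "\<dots> \<le> card x + card (\<Union>(set xs))" by (rule card_Un_le)
  also have "\<dots> \<le> card G0 + length xs * card G0" using copy_card[OF x] ih by simp
  finally show ?case using copy_fin[OF x] ih by simp
qed

lemma CC_Union: "xs \<in> CC j \<Longrightarrow> finite (\<Union>(set xs)) \<and> card (\<Union>(set xs)) \<le> j * card G0"
  using CC_set[of xs j] card_Union_list[of xs] by auto

lemma CC1: "CC 1 = (\<lambda>\<Gamma>. [\<Gamma>]) ` copies G0 n"
proof
  show "CC 1 \<subseteq> (\<lambda>\<Gamma>. [\<Gamma>]) ` copies G0 n"
  proof
    fix xs assume xs: "xs \<in> CC 1"
    then have "length xs = 1" "xs ! 0 \<in> copies G0 n" unfolding connected_copies_def by auto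
    then show "xs \<in> (\<lambda>\<Gamma>. [\<Gamma>]) ` copies G0 n"
      by (metis One_nat_def image_eqI length_0_conv length_Suc_conv nth_Cons_0)
  qed
  show "(\<lambda>\<Gamma>. [\<Gamma>]) ` copies G0 n \<subseteq> CC 1"
    unfolding connected_copies_def by auto
qed

lemma CC_Suc:
  assumes "1 \<le> j"
  shows "CC (Suc j) = (\<lambda>(xs, \<Gamma>). xs @ [\<Gamma>]) ` (SIGMA xs:CC j. {\<Gamma> \<in> copies G0 n. \<Gamma> \<inter> \<Union>(set xs) \<noteq> {}})"
proof
  show "CC (Suc j) \<subseteq> (\<lambda>(xs, \<Gamma>). xs @ [\<Gamma>]) ` (SIGMA xs:CC j. {\<Gamma> \<in> copies G0 n. \<Gamma> \<inter> \<Union>(set xs) \<noteq> {}})"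
  proof
    fix ys assume ys: "ys \<in> CC (Suc j)"
    have len: "length ys = Suc j" using ys unfolding connected_copies_def by simp
    have cop: "\<And>i. i < Suc j \<Longrightarrow> ys ! i \<in> copies G0 n" using ys unfolding connected_copies_def by simp
    have con: "\<And>i. 0 < i \<Longrightarrow> i < Suc j \<Longrightarrow> \<exists>k<i. ys ! i \<inter> ys ! k \<noteq> {}"
      using ys unfolding connected_copies_def by simp
    define xs where "xs = take j ys"
    have yseq: "ys = xs @ [ys ! j]" unfolding xs_def using len
      by (metis lessI take_Suc_conv_app_nth take_all_iff order_refl)
    have lx: "length xs = j" unfolding xs_def using len by simp
    have nx: "\<And>i. i < j \<Longrightarrow> xs ! i = ys ! i" unfolding xs_def by simp
    have "xs \<in> CC j" unfolding connected_copies_def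
    proof (intro CollectI conjI allI impI)
      show "length xs = j" by (rule lx)
      fix i assume "i < j" then show "xs ! i \<in> copies G0 n" using cop nx by simp
    next
      fix i assume i: "0 < i \<and> i < j"
      then obtain k where "k < i" "ys ! i \<inter> ys ! k \<noteq> {}" using con[of i] by auto
      then show "\<exists>k<i. xs ! i \<inter> xs ! k \<noteq> {}" using i nx by (metis order.strict_trans)
    qed
    moreover have "ys ! j \<inter> \<Union>(set xs) \<noteq> {}"
    proof -
      obtain k where k: "k < j" "ys ! j \<inter> ys ! k \<noteq> {}" using con[of j] assms by auto
      have "ys ! k \<in> set xs" using k(1) lx nx by (metis nth_mem)
      then show ?thesis using k(2) by blast
    qed
    moreover have "ys ! j \<in> copies G0 n" using cop by simp
    ultimately show "ys \<in> (\<lambda>(xs, \<Gamma>). xs @ [\<Gamma>]) ` (SIGMA xs:CC j. {\<Gamma> \<in> copies G0 n. \<Gamma> \<inter> \<Union>(set xs) \<noteq> {}})"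
      using yseq by (intro image_eqI[of _ _ "(xs, ys ! j)"]) auto
  qed
  show "(\<lambda>(xs, \<Gamma>). xs @ [\<Gamma>]) ` (SIGMA xs:CC j. {\<Gamma> \<in> copies G0 n. \<Gamma> \<inter> \<Union>(set xs) \<noteq> {}}) \<subseteq> CC (Suc j)"
  proof
    fix ys assume "ys \<in> (\<lambda>(xs, \<Gamma>). xs @ [\<Gamma>]) ` (SIGMA xs:CC j. {\<Gamma> \<in> copies G0 n. \<Gamma> \<inter> \<Union>(set xs) \<noteq> {}})"
    then obtain pr where pr: "pr \<in> (SIGMA xs:CC j. {\<Gamma> \<in> copies G0 n. \<Gamma> \<inter> \<Union>(set xs) \<noteq> {}})"
      "ys = (\<lambda>(xs, \<Gamma>). xs @ [\<Gamma>]) pr" by (rule imageE)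
    obtain xs \<Gamma> where pe: "pr = (xs, \<Gamma>)" by (cases pr)
    have xs: "xs \<in> CC j" and g: "\<Gamma> \<in> copies G0 n" "\<Gamma> \<inter> \<Union>(set xs) \<noteq> {}"
      and ys: "ys = xs @ [\<Gamma>]" using pr unfolding pe by auto
    have lx: "length xs = j" and cop: "\<And>i. i < j \<Longrightarrow> xs ! i \<in> copies G0 n"
      and con: "\<And>i. 0 < i \<Longrightarrow> i < j \<Longrightarrow> \<exists>k<i. xs ! i \<inter> xs ! k \<noteq> {}"
      using xs unfolding connected_copies_def by auto
    show "ys \<in> CC (Suc j)" unfolding connected_copies_def
    proof (intro CollectI conjI allI impI)
      show "length ys = Suc j" using ys lx by simp
      fix i assume i: "i < Suc j"
      show "ys ! i \<in> copies G0 n"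
      proof (cases "i < j")
        case True then show ?thesis using ys lx cop by (simp add: nth_append)
      next
        case False then have "i = j" using i by simp
        then show ?thesis using ys lx g(1) by (simp add: nth_append)
      qed
    next
      fix i assume i: "0 < i \<and> i < Suc j"
      show "\<exists>k<i. ys ! i \<inter> ys ! k \<noteq> {}"
      proof (cases "i < j")
        case True
        then obtain k where "k < i" "xs ! i \<inter> xs ! k \<noteq> {}" using con[of i] i by auto
        then show ?thesis using ys lx True by (intro exI[of _ k]) (simp add: nth_append)
      next
        case False then have ij: "i = j" using i by simp
        obtain y where "y \<in> \<Gamma>" "y \<in> \<Union>(set xs)" using g(2) by blast
        then obtain k where k: "k < j" "y \<in> xs ! k" by (metis UnionE in_set_conv_nth lx)
        have "ys ! i = \<Gamma>" using ys lx ij by (simp add: nth_append)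
        moreover have "ys ! k = xs ! k" using ys lx k(1) by (simp add: nth_append)
        ultimately show ?thesis using k \<open>y \<in> \<Gamma>\<close> ij by (intro exI[of _ k]) auto
      qed
    qed
  qed
qed

lemma sum_CC_Suc:
  assumes "1 \<le> j"
  shows "(\<Sum>ys\<in>CC (Suc j). g ys) = (\<Sum>xs\<in>CC j. \<Sum>\<Gamma>\<in>{\<Gamma> \<in> copies G0 n. \<Gamma> \<inter> \<Union>(set xs) \<noteq> {}}. g (xs @ [\<Gamma>]))"
proof -
  have inj: "inj_on (\<lambda>(xs, \<Gamma>). xs @ [\<Gamma>]) (SIGMA xs:CC j. {\<Gamma> \<in> copies G0 n. \<Gamma> \<inter> \<Union>(set xs) \<noteq> {}})"
    by (rule inj_onI) auto
  have "(\<Sum>ys\<in>CC (Suc j). g ys) = (\<Sum>(xs, \<Gamma>)\<in>(SIGMA xs:CC j. {\<Gamma> \<in> copies G0 n. \<Gamma> \<inter> \<Union>(set xs) \<noteq> {}}). g (xs @ [\<Gamma>]))"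
    unfolding CC_Suc[OF assms] by (rule sum.reindex_cong[OF inj refl]) clarsimp
  also have "\<dots> = (\<Sum>xs\<in>CC j. \<Sum>\<Gamma>\<in>{\<Gamma> \<in> copies G0 n. \<Gamma> \<inter> \<Union>(set xs) \<noteq> {}}. g (xs @ [\<Gamma>]))"
    by (rule sum.Sigma[symmetric]) (use finCC fin_copies in auto)
  finally show ?thesis .
qed

lemma card_Un_split: "finite U \<Longrightarrow> finite \<Gamma> \<Longrightarrow> card (U \<union> \<Gamma>) = card U + card (\<Gamma> - U)"
proof -
  assume f: "finite U" "finite \<Gamma>"
  have "U \<union> \<Gamma> = U \<union> (\<Gamma> - U)" by blast
  then show ?thesis using f card_Un_disjoint[of U "\<Gamma> - U"] by auto
qed

lemma p_split: "finite U \<Longrightarrow> \<Gamma> \<in> copies G0 n \<Longrightarrow> p ^ card (U \<union> \<Gamma>) = p ^ card U * p ^ card (\<Gamma> - U)"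
  using card_Un_split[of U \<Gamma>] copy_fin[of \<Gamma>] by (simp add: power_add)

lemma card_copies: "real (card (copies G0 n)) * real (aut G0) \<le> real n ^ card V"
proof -
  define A where "A = (\<lambda>\<Gamma>. {f \<in> emb. img f = \<Gamma>})"
  have "card (copies G0 n) * aut G0 = (\<Sum>\<Gamma>\<in>copies G0 n. aut G0)" by simp
  also have "\<dots> \<le> (\<Sum>\<Gamma>\<in>copies G0 n. card (A \<Gamma>))"
    by (rule sum_mono) (use aut_le in \<open>auto simp: A_def\<close>)
  also have "\<dots> = card (\<Union>(A ` copies G0 n))"
    by (rule card_UN_disjoint[symmetric]) (use fin_copies fin_emb in \<open>auto simp: A_def\<close>)
  also have "\<dots> \<le> card emb"
    by (rule card_mono[OF fin_emb]) (auto simp: A_def)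
  also have "\<dots> \<le> n ^ card V" by (rule card_emb)
  finally have "card (copies G0 n) * aut G0 \<le> n ^ card V" .
  then have "real (card (copies G0 n) * aut G0) \<le> real (n ^ card V)" by (rule of_nat_mono)
  then show ?thesis by simp
qed


definition X :: real where "X = real n ^ card V * p ^ card G0"

definition A :: "nat \<Rightarrow> real" where
  "A j = X ^ j * fact (card V) ^ (j - 1) * 2 ^ (tri j * card G0) / (real (aut G0) ^ j * Psi ^ (j - 1))"

lemma partI: "1 \<le> j \<Longrightarrow> (\<Sum>M\<in>CC j. p ^ card (\<Union>(set M))) \<le> A j"
proof (induction j rule: nat_induct_at_least)
  case base
  have "(\<Sum>M\<in>CC 1. p ^ card (\<Union>(set M))) = (\<Sum>\<Gamma>\<in>copies G0 n. p ^ card (\<Union>(set [\<Gamma>])))"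
    unfolding CC1 by (rule sum.reindex_cong[OF _ refl]) (auto intro: inj_onI)
  also have "\<dots> = (\<Sum>\<Gamma>\<in>copies G0 n. p ^ card G0)"
    by (rule sum.cong[OF refl]) (simp add: copy_card)
  also have "\<dots> = real (card (copies G0 n)) * p ^ card G0" by simp
  also have "\<dots> \<le> real n ^ card V / real (aut G0) * p ^ card G0"
  proof (rule mult_right_mono)
    show "real (card (copies G0 n)) \<le> real n ^ card V / real (aut G0)"
      using card_copies aut_pos by (simp add: field_simps)
  qed (use p0 in simp)
  also have "\<dots> = A 1" unfolding A_def X_def tri_1 by simp
  finally show ?case .
next
  case (Suc j)
  have "(\<Sum>M\<in>CC (Suc j). p ^ card (\<Union>(set M)))
      = (\<Sum>xs\<in>CC j. \<Sum>\<Gamma>\<in>{\<Gamma> \<in> copies G0 n. \<Gamma> \<inter> \<Union>(set xs) \<noteq> {}}. p ^ card (\<Union>(set (xs @ [\<Gamma>]))))"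
    by (rule sum_CC_Suc[OF Suc.hyps])
  also have "\<dots> = (\<Sum>xs\<in>CC j. p ^ card (\<Union>(set xs)) * (\<Sum>\<Gamma>\<in>{\<Gamma> \<in> copies G0 n. \<Gamma> \<inter> \<Union>(set xs) \<noteq> {}}. p ^ card (\<Gamma> - \<Union>(set xs))))"
  proof (rule sum.cong[OF refl])
    fix xs assume xs: "xs \<in> CC j"
    have fu: "finite (\<Union>(set xs))" using CC_Union[OF xs] by simp
    show "(\<Sum>\<Gamma>\<in>{\<Gamma> \<in> copies G0 n. \<Gamma> \<inter> \<Union>(set xs) \<noteq> {}}. p ^ card (\<Union>(set (xs @ [\<Gamma>]))))
        = p ^ card (\<Union>(set xs)) * (\<Sum>\<Gamma>\<in>{\<Gamma> \<in> copies G0 n. \<Gamma> \<inter> \<Union>(set xs) \<noteq> {}}. p ^ card (\<Gamma> - \<Union>(set xs)))"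
      unfolding sum_distrib_left
    proof (rule sum.cong[OF refl])
      fix \<Gamma> assume "\<Gamma> \<in> {\<Gamma> \<in> copies G0 n. \<Gamma> \<inter> \<Union>(set xs) \<noteq> {}}"
      then have g: "\<Gamma> \<in> copies G0 n" by simp
      have "\<Union>(set (xs @ [\<Gamma>])) = \<Union>(set xs) \<union> \<Gamma>" by auto
      then show "p ^ card (\<Union>(set (xs @ [\<Gamma>]))) = p ^ card (\<Union>(set xs)) * p ^ card (\<Gamma> - \<Union>(set xs))"
        using p_split[OF fu g] by simp
    qed
  qed
  also have "\<dots> \<le> (\<Sum>xs\<in>CC j. p ^ card (\<Union>(set xs)) * (2 ^ (j * card G0) * (K / Psi)))"
  proof (rule sum_mono)
    fix xs assume xs: "xs \<in> CC j"
    have fu: "finite (\<Union>(set xs))" and cu: "card (\<Union>(set xs)) \<le> j * card G0" using CC_Union[OF xs] by auto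
    have "(\<Sum>\<Gamma>\<in>{\<Gamma> \<in> copies G0 n. \<Gamma> \<inter> \<Union>(set xs) \<noteq> {}}. p ^ card (\<Gamma> - \<Union>(set xs)))
        \<le> 2 ^ card (\<Union>(set xs)) * (K / Psi)" by (rule sum_meet[OF fu])
    also have "\<dots> \<le> 2 ^ (j * card G0) * (K / Psi)"
      by (rule mult_right_mono) (use cu K_nonneg Psi_pos in auto)
    finally show "p ^ card (\<Union>(set xs)) * (\<Sum>\<Gamma>\<in>{\<Gamma> \<in> copies G0 n. \<Gamma> \<inter> \<Union>(set xs) \<noteq> {}}. p ^ card (\<Gamma> - \<Union>(set xs)))
        \<le> p ^ card (\<Union>(set xs)) * (2 ^ (j * card G0) * (K / Psi))"
      by (rule mult_left_mono) (use p0 in simp)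
  qed
  also have "\<dots> = (\<Sum>xs\<in>CC j. p ^ card (\<Union>(set xs))) * (2 ^ (j * card G0) * (K / Psi))"
    by (rule sum_distrib_right[symmetric])
  also have "\<dots> \<le> A j * (2 ^ (j * card G0) * (K / Psi))"
    by (rule mult_right_mono[OF Suc.IH]) (use K_nonneg Psi_pos in simp)
  also have "\<dots> = A (Suc j)"
  proof -
    obtain i where i: "j = Suc i" using Suc.hyps by (cases j) auto
    show ?thesis unfolding A_def K_def X_def i tri_Suc
      by (simp add: field_simps power_add power_mult_distrib)
  qed
  finally show ?case .
qed

definition B :: "nat \<Rightarrow> nat \<Rightarrow> real" where
  "B k j = 2 ^ ((j * k + tri j) * card G0) * K ^ j / (min Psi 1 * Psi ^ (j - 1))"

lemma B_nonneg: "0 \<le> B k j" unfolding B_def using K_nonneg Psi_pos by simp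

lemma partII:
  assumes "finite U" "card U \<le> k * card G0"
  shows "1 \<le> j \<Longrightarrow> (\<Sum>M\<in>CC j. p ^ card (U \<union> \<Union>(set M))) \<le> p ^ card U * B k j"
proof (induction j rule: nat_induct_at_least)
  case base
  have "(\<Sum>M\<in>CC 1. p ^ card (U \<union> \<Union>(set M))) = (\<Sum>\<Gamma>\<in>copies G0 n. p ^ card (U \<union> \<Union>(set [\<Gamma>])))"
    unfolding CC1 by (rule sum.reindex_cong[OF _ refl]) (auto intro: inj_onI)
  also have "\<dots> = (\<Sum>\<Gamma>\<in>copies G0 n. p ^ card U * p ^ card (\<Gamma> - U))"
    by (rule sum.cong[OF refl]) (simp add: p_split[OF assms(1)])
  also have "\<dots> = p ^ card U * (\<Sum>\<Gamma>\<in>copies G0 n. p ^ card (\<Gamma> - U))"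
    by (rule sum_distrib_left[symmetric])
  also have "\<dots> \<le> p ^ card U * (2 ^ card U * (K / min Psi 1))"
    by (rule mult_left_mono[OF sum_all[OF assms(1)]]) (use p0 in simp)
  also have "\<dots> \<le> p ^ card U * (2 ^ (k * card G0) * (K / min Psi 1))"
    by (intro mult_left_mono mult_right_mono) (use assms(2) K_nonneg Psi_pos p0 in auto)
  also have "\<dots> = p ^ card U * B k 1" unfolding B_def tri_1 by simp
  finally show ?case .
next
  case (Suc j)
  have "(\<Sum>M\<in>CC (Suc j). p ^ card (U \<union> \<Union>(set M)))
      = (\<Sum>xs\<in>CC j. \<Sum>\<Gamma>\<in>{\<Gamma> \<in> copies G0 n. \<Gamma> \<inter> \<Union>(set xs) \<noteq> {}}. p ^ card (U \<union> \<Union>(set (xs @ [\<Gamma>]))))"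
    by (rule sum_CC_Suc[OF Suc.hyps])
  also have "\<dots> \<le> (\<Sum>xs\<in>CC j. p ^ card (U \<union> \<Union>(set xs)) * (2 ^ ((k + j) * card G0) * (K / Psi)))"
  proof (rule sum_mono)
    fix xs assume xs: "xs \<in> CC j"
    define U' where "U' = U \<union> \<Union>(set xs)"
    have fu: "finite U'" using CC_Union[OF xs] assms(1) unfolding U'_def by simp
    have cu: "card U' \<le> (k + j) * card G0"
    proof -
      have "card U' \<le> card U + card (\<Union>(set xs))" unfolding U'_def by (rule card_Un_le)
      also have "\<dots> \<le> k * card G0 + j * card G0" using assms(2) CC_Union[OF xs] by simp
      finally show ?thesis by (simp add: algebra_simps)
    qed
    have "(\<Sum>\<Gamma>\<in>{\<Gamma> \<in> copies G0 n. \<Gamma> \<inter> \<Union>(set xs) \<noteq> {}}. p ^ card (U \<union> \<Union>(set (xs @ [\<Gamma>]))))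
        = (\<Sum>\<Gamma>\<in>{\<Gamma> \<in> copies G0 n. \<Gamma> \<inter> \<Union>(set xs) \<noteq> {}}. p ^ card U' * p ^ card (\<Gamma> - U'))"
    proof (rule sum.cong[OF refl])
      fix \<Gamma> assume "\<Gamma> \<in> {\<Gamma> \<in> copies G0 n. \<Gamma> \<inter> \<Union>(set xs) \<noteq> {}}"
      then have g: "\<Gamma> \<in> copies G0 n" by simp
      have "U \<union> \<Union>(set (xs @ [\<Gamma>])) = U' \<union> \<Gamma>" unfolding U'_def by auto
      then show "p ^ card (U \<union> \<Union>(set (xs @ [\<Gamma>]))) = p ^ card U' * p ^ card (\<Gamma> - U')"
        using p_split[OF fu g] by simp
    qed
    also have "\<dots> = p ^ card U' * (\<Sum>\<Gamma>\<in>{\<Gamma> \<in> copies G0 n. \<Gamma> \<inter> \<Union>(set xs) \<noteq> {}}. p ^ card (\<Gamma> - U'))"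
      by (rule sum_distrib_left[symmetric])
    also have "\<dots> \<le> p ^ card U' * (\<Sum>\<Gamma>\<in>{\<Gamma> \<in> copies G0 n. \<Gamma> \<inter> U' \<noteq> {}}. p ^ card (\<Gamma> - U'))"
    proof (rule mult_left_mono)
      show "(\<Sum>\<Gamma>\<in>{\<Gamma> \<in> copies G0 n. \<Gamma> \<inter> \<Union>(set xs) \<noteq> {}}. p ^ card (\<Gamma> - U'))
          \<le> (\<Sum>\<Gamma>\<in>{\<Gamma> \<in> copies G0 n. \<Gamma> \<inter> U' \<noteq> {}}. p ^ card (\<Gamma> - U'))"
        by (rule sum_mono2) (use fin_copies p0 in \<open>auto simp: U'_def\<close>)
    qed (use p0 in simp)
    also have "\<dots> \<le> p ^ card U' * (2 ^ card U' * (K / Psi))"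
      by (rule mult_left_mono[OF sum_meet[OF fu]]) (use p0 in simp)
    also have "\<dots> \<le> p ^ card U' * (2 ^ ((k + j) * card G0) * (K / Psi))"
      by (intro mult_left_mono mult_right_mono) (use cu K_nonneg Psi_pos p0 in auto)
    finally show "(\<Sum>\<Gamma>\<in>{\<Gamma> \<in> copies G0 n. \<Gamma> \<inter> \<Union>(set xs) \<noteq> {}}. p ^ card (U \<union> \<Union>(set (xs @ [\<Gamma>]))))
        \<le> p ^ card (U \<union> \<Union>(set xs)) * (2 ^ ((k + j) * card G0) * (K / Psi))" unfolding U'_def .
  qed
  also have "\<dots> = (\<Sum>xs\<in>CC j. p ^ card (U \<union> \<Union>(set xs))) * (2 ^ ((k + j) * card G0) * (K / Psi))"
    by (rule sum_distrib_right[symmetric])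
  also have "\<dots> \<le> p ^ card U * B k j * (2 ^ ((k + j) * card G0) * (K / Psi))"
    by (rule mult_right_mono[OF Suc.IH]) (use K_nonneg Psi_pos in simp)
  also have "\<dots> = p ^ card U * B k (Suc j)"
  proof -
    obtain i where i: "j = Suc i" using Suc.hyps by (cases j) auto
    show ?thesis unfolding B_def i tri_Suc
      by (simp add: field_simps power_add power_mult_distrib)
  qed
  finally show ?case .
qed
end



lemma powr_tri: "(2::real) powr (real (k * (k - 1) * e) / 2) = 2 ^ (tri k * e)"
proof -
  have eq: "real (k * (k - 1) * e) / 2 = real (tri k * e)"
  proof -
    have h: "k * (k - 1) * e = 2 * (tri k * e)" using tri2[of k] by (simp add: mult.assoc)
    show ?thesis unfolding h by simp
  qed
  show ?thesis unfolding eq by (rule powr_realpow) simp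
qed

lemma copies_empty0: assumes "G0 \<noteq> {}" shows "copies G0 0 = {}"
proof (rule ccontr)
  assume "copies G0 0 \<noteq> {}"
  then obtain \<Gamma> where g: "\<Gamma> \<in> copies G0 0" by blast
  then have "\<Gamma> \<subseteq> Kn_edges 0" unfolding copies_def by simp
  then have "\<Gamma> = {}" unfolding Kn_edges_def by auto
  moreover obtain f where "(\<lambda>e. f ` e) ` G0 = \<Gamma>" using g unfolding copies_def graph_iso_def by blast
  ultimately show False using assms by simp
qed

lemma CC_empty0: assumes "G0 \<noteq> {}" "1 \<le> j" shows "connected_copies G0 0 j = {}"
proof (rule ccontr)
  assume "connected_copies G0 0 j \<noteq> {}"
  then obtain xs where "xs \<in> connected_copies G0 0 j" by blast
  then have "xs ! 0 \<in> copies G0 0" using assms(2) unfolding connected_copies_def by auto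
  then show False using copies_empty0[OF assms(1)] by simp
qed

theorem lemma5p5:
  fixes G0 :: "'a set set" and n m mh :: nat and p :: real
  assumes "is_graph G0" and "G0 \<noteq> {}"
    and "0 < p" and "p < 1"
    and "1 \<le> m" and "1 \<le> mh"
  shows "(\<Sum>M\<in>connected_copies G0 n m. p ^ card (\<Union>(set M)))
           \<le> c_const G0 m * (real n ^ (m * card (verts G0)) * p ^ (m * card G0))
               / Psi_min G0 n p ^ (m - 1)
    \<and>     (\<Sum>(M, Mh)\<in>connected_copies G0 n m \<times> connected_copies G0 n mh.
              p ^ card (\<Union>(set (M @ Mh))))
          \<le> c_const G0 (m + mh)
               * (real n ^ ((m + mh) * card (verts G0)) * p ^ ((m + mh) * card G0))
               / (Psi_min G0 n p ^ (m + mh - 2) * min (Psi_min G0 n p) 1)"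
proof (cases "n = 0")
  case True
  have vpos: "0 < card (verts G0)"
  proof -
    obtain e where e: "e \<in> G0" using assms(2) by blast
    then have "card e = 2" using assms(1) unfolding is_graph_def by simp
    then have "e \<noteq> {}" by auto
    then have "verts G0 \<noteq> {}" using e unfolding verts_def by blast
    moreover have "finite (verts G0)" unfolding verts_def using assms(1) unfolding is_graph_def
      by (metis card.infinite finite_Union zero_neq_numeral)
    ultimately show ?thesis by (simp add: card_gt_0_iff)
  qed
  have z1: "real n ^ (m * card (verts G0)) = 0" using True vpos assms(5) by simp
  have z2: "real n ^ ((m + mh) * card (verts G0)) = 0" using True vpos assms(5) by simp
  have e1: "connected_copies G0 n m = {}" using CC_empty0[OF assms(2,5)] True by simp
  have e2: "connected_copies G0 n mh = {}" using CC_empty0[OF assms(2,6)] True by simp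
  show ?thesis unfolding z1 z2 e1 by simp
next
  case False
  interpret setting G0 n p using assms False by unfold_locales auto
  have Xm: "\<And>k. real n ^ (k * card (verts G0)) * p ^ (k * card G0) = X ^ k"
  proof -
    fix k
    have "real n ^ (k * card (verts G0)) = (real n ^ card V) ^ k" by (simp add: power_mult[symmetric] mult.commute)
    moreover have "p ^ (k * card G0) = (p ^ card G0) ^ k" by (simp add: power_mult[symmetric] mult.commute)
    ultimately show "real n ^ (k * card (verts G0)) * p ^ (k * card G0) = X ^ k"
      unfolding X_def by (simp add: power_mult_distrib)
  qed
  have parta: "(\<Sum>M\<in>CC m. p ^ card (\<Union>(set M))) \<le> A m" by (rule partI[OF assms(5)])
  have A_eq: "A m = c_const G0 m * (real n ^ (m * card (verts G0)) * p ^ (m * card G0))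
               / Psi_min G0 n p ^ (m - 1)"
    unfolding Xm c_const_def powr_tri A_def aut_eq by (simp add: field_simps)
  have "(\<Sum>(M, Mh)\<in>CC m \<times> CC mh. p ^ card (\<Union>(set (M @ Mh))))
      = (\<Sum>M\<in>CC m. \<Sum>Mh\<in>CC mh. p ^ card (\<Union>(set M) \<union> \<Union>(set Mh)))"
    by (simp add: sum.cartesian_product)
  also have "\<dots> \<le> (\<Sum>M\<in>CC m. p ^ card (\<Union>(set M)) * B m mh)"
  proof (rule sum_mono)
    fix M assume M: "M \<in> CC m"
    show "(\<Sum>Mh\<in>CC mh. p ^ card (\<Union>(set M) \<union> \<Union>(set Mh))) \<le> p ^ card (\<Union>(set M)) * B m mh"
      using partII[of "\<Union>(set M)" m mh] CC_Union[OF M] assms(6) by simp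
  qed
  also have "\<dots> = (\<Sum>M\<in>CC m. p ^ card (\<Union>(set M))) * B m mh" by (rule sum_distrib_right[symmetric])
  also have "\<dots> \<le> A m * B m mh" by (rule mult_right_mono[OF parta B_nonneg])
  also have "\<dots> = c_const G0 (m + mh)
               * (real n ^ ((m + mh) * card (verts G0)) * p ^ ((m + mh) * card G0))
               / (Psi_min G0 n p ^ (m + mh - 2) * min (Psi_min G0 n p) 1)"
  proof -
    obtain a where a: "m = Suc a" using assms(5) by (cases m) auto
    obtain b where b: "mh = Suc b" using assms(6) by (cases mh) auto
    have e1: "m + mh - 1 = Suc (a + b)" "m + mh - 2 = a + b" using a b by auto
    have KX: "K = fact (card V) / real (card Aut) * X" unfolding K_def X_def aut_eq by simp
    have nz: "Psi \<noteq> 0" "min Psi 1 \<noteq> 0" "real (card Aut) \<noteq> 0" "X \<noteq> 0"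
      using Psi_pos aut_pos n0 p0 unfolding aut_eq X_def by auto
    have "A m * B m mh = X ^ Suc a * fact (card V) ^ a * 2 ^ (tri (Suc a) * card G0) / (real (card Aut) ^ Suc a * Psi ^ a) *
         (2 ^ ((Suc b * Suc a + tri (Suc b)) * card G0) * (fact (card V) / real (card Aut) * X) ^ Suc b / (min Psi 1 * Psi ^ b))"
      unfolding A_def B_def KX aut_eq a b by (simp only: diff_Suc_1)
    also have "\<dots> = fact (card V) ^ Suc (a + b) * 2 ^ ((tri (Suc a) + Suc a * Suc b + tri (Suc b)) * card G0)
         / real (card Aut) ^ (Suc a + Suc b) * X ^ (Suc a + Suc b) / (Psi ^ (a + b) * min Psi 1)"
      by (rule alg) (use nz in auto)
    also have "\<dots> = c_const G0 (m + mh)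
               * (real n ^ ((m + mh) * card (verts G0)) * p ^ ((m + mh) * card G0))
               / (Psi_min G0 n p ^ (m + mh - 2) * min (Psi_min G0 n p) 1)"
      unfolding Xm c_const_def powr_tri
      unfolding aut_eq tri_add e1 unfolding a b by (simp only: of_nat_fact)
    finally show ?thesis .
  qed
  finally show ?thesis using parta A_eq by simp
qed

end
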